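(* Let $X$ be a strictly convex $C^{(3)}$ curve in the plane $\mathbb{R}^2$, and let $P\in X$. For sufficiently small $h>0$, let $T_P(h)$ and $U_P(h)$ be the areas of the triangles $\triangle AA_1A_2$ and $\triangle BB_1B_2$ associated with $P$ and $h$ as described in the context. Then $$\lim_{h\to 0^+}\frac{T_P(h)}{h\sqrt{h}}=\frac{\sqrt{2}}{\sqrt{\kappa(P)}}\qquad\text{and}\qquad \lim_{h\to 0^+}\frac{U_P(h)}{h\sqrt{h}}=\frac{\sqrt{2}}{2\sqrt{\kappa(P)}},$$ where $\kappa(P)$ is the curvature of $X$ at $P$ with respect to the unit normal $N$ pointing to the convex side.
   Context: A regular plane curve $X$ defined on an open interval is convex if for every point of $X$ the trace of $X$ lies entirely in one closed half-plane determined by the tangent line at that point. A simple convex curve $X$ is called strictly convex if it is of class $C^{(3)}$ and has positive curvature $\kappa$ with respect to the unit normal $N$ pointing to the convex side, i.e. $\kappa(s)=\langle X''(s),N(X(s))\rangle>0$ for an arclength parametrization $X(s)$. For $P=A\in X$ and sufficiently small $h>0$, let $m$ be the line through $P+hN(P)$ parallel to the tangent line $\ell$ of $X$ at $P$, and let $A_1,A_2$ be the two points where $m$ meets $X$. Let $\ell_1,\ell_2$ be the tangent lines of $X$ at $A_1,A_2$, and let $B=\ell_1\cap\ell_2$, $B_1=\ell\cap\ell_1$, $B_2=\ell\cap\ell_2$. Define $T_P(h)=|\triangle AA_1A_2|$ and $U_P(h)=|\triangle BB_1B_2|$ (areas). *)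

theory Defs
  imports "HOL-Analysis.Analysis"
begin

definition rot90 :: "real^2 \<Rightarrow> real^2" where
  "rot90 x = (\<chi> i. if i = 1 then - (x$2) else x$1)"

definition cross2 :: "real^2 \<Rightarrow> real^2 \<Rightarrow> real" where
  "cross2 x y = x$1 * y$2 - x$2 * y$1"

definition tri_area :: "real^2 \<Rightarrow> real^2 \<Rightarrow> real^2 \<Rightarrow> real" where
  "tri_area a b c = \<bar>cross2 (b - a) (c - a)\<bar> / 2"

definition line_thru :: "real^2 \<Rightarrow> real^2 \<Rightarrow> (real^2) set" where
  "line_thru p u = {x. \<exists>t. x = p + t *\<^sub>R u}"

definition line_meet :: "real^2 \<Rightarrow> real^2 \<Rightarrow> real^2 \<Rightarrow> real^2 \<Rightarrow> real^2" where
  "line_meet p u q v = (THE x. x \<in> line_thru p u \<and> x \<in> line_thru q v)"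

definition C3_on :: "real set \<Rightarrow> (real \<Rightarrow> real^2) \<Rightarrow> bool" where
  "C3_on I X \<longleftrightarrow> (\<exists>X1 X2 X3. (\<forall>s\<in>I. (X has_vector_derivative X1 s) (at s)
      \<and> (X1 has_vector_derivative X2 s) (at s) \<and> (X2 has_vector_derivative X3 s) (at s))
      \<and> continuous_on I X3)"

definition D1 :: "(real \<Rightarrow> real^2) \<Rightarrow> real \<Rightarrow> real^2" where
  "D1 X s = vector_derivative X (at s)"

definition D2 :: "(real \<Rightarrow> real^2) \<Rightarrow> real \<Rightarrow> real^2" where
  "D2 X s = vector_derivative (D1 X) (at s)"

definition convex_curve :: "real set \<Rightarrow> (real \<Rightarrow> real^2) \<Rightarrow> bool" where
  "convex_curve I X \<longleftrightarrow> (\<forall>s\<in>I.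
      (\<forall>t\<in>I. (X t - X s) \<bullet> rot90 (D1 X s) \<ge> 0) \<or> (\<forall>t\<in>I. (X t - X s) \<bullet> rot90 (D1 X s) \<le> 0))"

definition normal :: "real set \<Rightarrow> (real \<Rightarrow> real^2) \<Rightarrow> real \<Rightarrow> real^2" where
  "normal I X s = (if (\<forall>t\<in>I. (X t - X s) \<bullet> rot90 (D1 X s) \<ge> 0)
                   then rot90 (D1 X s) else - rot90 (D1 X s))"

definition curvature :: "real set \<Rightarrow> (real \<Rightarrow> real^2) \<Rightarrow> real \<Rightarrow> real" where
  "curvature I X s = D2 X s \<bullet> normal I X s"

definition strictly_convex_curve :: "real set \<Rightarrow> (real \<Rightarrow> real^2) \<Rightarrow> bool" where
  "strictly_convex_curve I X \<longleftrightarrow> open I \<and> is_interval I \<and> I \<noteq> {}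
     \<and> C3_on I X \<and> (\<forall>s\<in>I. norm (D1 X s) = 1)
     \<and> inj_on X I \<and> convex_curve I X \<and> (\<forall>s\<in>I. curvature I X s > 0)"

text \<open>Parameter of a point of the trace (well defined since X is simple).\<close>
definition param :: "real set \<Rightarrow> (real \<Rightarrow> real^2) \<Rightarrow> real^2 \<Rightarrow> real" where
  "param I X q = (THE s. s \<in> I \<and> X s = q)"

definition meet_set :: "real set \<Rightarrow> (real \<Rightarrow> real^2) \<Rightarrow> real \<Rightarrow> real \<Rightarrow> (real^2) set" where
  "meet_set I X s0 h = X ` I \<inter> line_thru (X s0 + h *\<^sub>R normal I X s0) (D1 X s0)"

definition A12 :: "real set \<Rightarrow> (real \<Rightarrow> real^2) \<Rightarrow> real \<Rightarrow> real \<Rightarrow> (real^2) \<times> (real^2)" where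
  "A12 I X s0 h = (SOME (a1, a2). a1 \<noteq> a2 \<and> meet_set I X s0 h = {a1, a2})"

definition T_area :: "real set \<Rightarrow> (real \<Rightarrow> real^2) \<Rightarrow> real \<Rightarrow> real \<Rightarrow> real" where
  "T_area I X s0 h = (case A12 I X s0 h of (a1, a2) \<Rightarrow> tri_area (X s0) a1 a2)"

definition U_area :: "real set \<Rightarrow> (real \<Rightarrow> real^2) \<Rightarrow> real \<Rightarrow> real \<Rightarrow> real" where
  "U_area I X s0 h = (case A12 I X s0 h of (a1, a2) \<Rightarrow>
     (let d1 = D1 X (param I X a1); d2 = D1 X (param I X a2); d = D1 X s0;
          B = line_meet a1 d1 a2 d2;
          B1 = line_meet (X s0) d a1 d1;
          B2 = line_meet (X s0) d a2 d2
      in tri_area B B1 B2))"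

end

theory Submission
  imports Defs
begin


lemma vd_inner:
  assumes "(f has_vector_derivative f') (at s)"
  shows "((\<lambda>s. f s \<bullet> c) has_real_derivative (f' \<bullet> c)) (at s)"
proof -
  have "((\<lambda>s. f s \<bullet> c) has_vector_derivative (f' \<bullet> c)) (at s)"
    using bounded_linear.has_vector_derivative[OF bounded_linear_inner_left assms] .
  then show ?thesis by (simp add: has_real_derivative_iff_has_vector_derivative)
qed

lemma rot90_comp: "rot90 x $ 1 = - x$2" "rot90 x $ 2 = x$1"
  by (simp_all add: rot90_def)

lemma inner2: "(x::real^2) \<bullet> y = x$1*y$1 + x$2*y$2"
  by (simp add: inner_vec_def sum_2)

lemma norm2: "norm (x::real^2) = sqrt ((x$1)^2 + (x$2)^2)"
  by (simp add: norm_eq_sqrt_inner inner2 power2_eq_square)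

lemma rot90_inner_self[simp]: "x \<bullet> rot90 x = 0" "rot90 x \<bullet> x = 0"
  by (simp_all add: inner2 rot90_comp)

lemma rot90_inner_swap: "a \<bullet> rot90 b = - (rot90 a \<bullet> b)"
  by (simp add: inner2 rot90_comp)

lemma rot90_norm: "norm (rot90 x) = norm x"
  by (simp add: norm2 rot90_comp add.commute)

lemma rot90_linear: "rot90 (a *\<^sub>R x) = a *\<^sub>R rot90 x" "rot90 (x + y) = rot90 x + rot90 y"
   "rot90 (x - y) = rot90 x - rot90 y" "rot90 (-x) = - rot90 x"
  by (simp_all add: vec_eq_iff forall_2 rot90_comp)

lemma decomp:
  assumes "norm T = 1"
  shows "x = (x \<bullet> T) *\<^sub>R T + (x \<bullet> rot90 T) *\<^sub>R rot90 T"
proof -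
  have e: "T$1*T$1 + T$2*T$2 = 1" using assms by (simp add: norm2 power2_eq_square)
  show ?thesis
    using e by (simp add: vec_eq_iff forall_2 inner2 rot90_comp algebra_simps) algebra
qed

lemma cross2_coord:
  assumes "norm T = 1"
  shows "cross2 x y = (x \<bullet> T) * (y \<bullet> rot90 T) - (x \<bullet> rot90 T) * (y \<bullet> T)"
proof -
  have e: "T$1*T$1 + T$2*T$2 = 1" using assms by (simp add: norm2 power2_eq_square)
  show ?thesis
    using e by (simp add: cross2_def inner2 rot90_comp algebra_simps) algebra
qed

lemma line_meet_eq:
  assumes "cross2 u v \<noteq> 0"
  shows "line_meet p u q v = p + (cross2 (q - p) v / cross2 u v) *\<^sub>R u"
  unfolding line_meet_def
proof (rule the_equality)
  let ?t = "cross2 (q - p) v / cross2 u v"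
  let ?s = "cross2 (q - p) u / cross2 u v"
  show "p + ?t *\<^sub>R u \<in> line_thru p u \<and> p + ?t *\<^sub>R u \<in> line_thru q v"
    unfolding line_thru_def
  proof (intro conjI CollectI exI)
    show "p + ?t *\<^sub>R u = p + ?t *\<^sub>R u" by simp
    show "p + ?t *\<^sub>R u = q + ?s *\<^sub>R v"
      using assms by (simp add: vec_eq_iff forall_2 cross2_def field_simps)
  qed
next
  fix x assume "x \<in> line_thru p u \<and> x \<in> line_thru q v"
  then obtain t s where x: "x = p + t *\<^sub>R u" "x = q + s *\<^sub>R v" unfolding line_thru_def by blast
  then have e1: "p$1 + t * u$1 = q$1 + s * v$1" and e2: "p$2 + t * u$2 = q$2 + s * v$2"
    by (auto simp: vec_eq_iff forall_2)
  have "t * cross2 u v = cross2 (q - p) v"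
    using e1 e2 by (simp add: cross2_def algebra_simps) algebra
  then have "t = cross2 (q - p) v / cross2 u v" using assms by (simp add: field_simps)
  then show "x = p + (cross2 (q - p) v / cross2 u v) *\<^sub>R u" using x by simp
qed

lemma kk: "(ua - ub) * qa / (pb * qa - qb * pa) * qb = (ub - ua) * qb / (pa * qb - qa * pb) * (qa::real)"
proof -
  have e1: "pb * qa - qb * pa = - (pa * qb - qa * pb)" by (simp add: algebra_simps)
  have e2: "(ua-ub)*qa*qb = -((ub-ua)*qb*qa)" by (simp add: algebra_simps)
  have "(ua - ub) * qa / (pb * qa - qb * pa) * qb = ((ua-ub)*qa*qb) / (pb*qa - qb*pa)" by simp
  also have "\<dots> = (-((ub-ua)*qb*qa)) / (-(pa*qb - qa*pb))" by (simp only: e1 e2)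
  also have "\<dots> = ((ub-ua)*qb*qa) / (pa*qb - qa*pb)" by (rule minus_divide_divide)
  also have "\<dots> = (ub - ua) * qb / (pa * qb - qa * pb) * qa" by simp
  finally show ?thesis .
qed

lemma Uf_scale:
  fixes r U1 U2 P1 P2 Q1 Q2 :: real
  assumes r: "r > 0" and q1: "Q1 \<noteq> 0" and q2: "Q2 \<noteq> 0" and d: "P1*Q2 - Q1*P2 \<noteq> 0"
  shows "\<bar>r*r + (U2*r - U1*r) * (Q2*r) / (P1*(Q2*r) - (Q1*r)*P2) * (Q1*r)\<bar> *
      \<bar>(U2*r - r*r*P2/(Q2*r)) - (U1*r - r*r*P1/(Q1*r))\<bar> / 2 / (r*r*r)
    = \<bar>1 + (U2 - U1) * Q2 / (P1*Q2 - Q1*P2) * Q1\<bar> * \<bar>(U2 - P2/Q2) - (U1 - P1/Q1)\<bar> / 2"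
proof -
  have d': "P1*(Q2*r) - (Q1*r)*P2 = r * (P1*Q2 - Q1*P2)" by (simp add: algebra_simps)
  have e1: "r*r + (U2*r - U1*r) * (Q2*r) / (P1*(Q2*r) - (Q1*r)*P2) * (Q1*r)
      = (r*r) * (1 + (U2 - U1) * Q2 / (P1*Q2 - Q1*P2) * Q1)"
    unfolding d' using r d by (simp add: field_simps)
  have e2: "(U2*r - r*r*P2/(Q2*r)) - (U1*r - r*r*P1/(Q1*r)) = r * ((U2 - P2/Q2) - (U1 - P1/Q1))"
    using r q1 q2 by (simp add: field_simps)
  show ?thesis unfolding e1 e2 abs_mult using r by (simp add: field_simps)
qed

lemma G_tendsto:
  fixes U1 U2 P1 P2 Q1 Q2 :: "'a \<Rightarrow> real"
  assumes "(U1 \<longlongrightarrow> a1) F" "(U2 \<longlongrightarrow> a2) F" "(P1 \<longlongrightarrow> b1) F" "(P2 \<longlongrightarrow> b2) F"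
    "(Q1 \<longlongrightarrow> d1) F" "(Q2 \<longlongrightarrow> d2) F" "d1 \<noteq> 0" "d2 \<noteq> 0" "b1 * d2 - d1 * b2 \<noteq> 0"
  shows "((\<lambda>h. \<bar>1 + (U2 h - U1 h) * Q2 h / (P1 h * Q2 h - Q1 h * P2 h) * Q1 h\<bar> *
         \<bar>(U2 h - P2 h / Q2 h) - (U1 h - P1 h / Q1 h)\<bar> / 2) \<longlongrightarrow>
     \<bar>1 + (a2 - a1) * d2 / (b1 * d2 - d1 * b2) * d1\<bar> * \<bar>(a2 - b2 / d2) - (a1 - b1 / d1)\<bar> / 2) F"
  by (intro tendsto_intros assms) simp

locale scc =
  fixes I :: "real set" and X :: "real \<Rightarrow> real^2" and s0 :: real and X1 X2 :: "real \<Rightarrow> real^2"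
  assumes I_open: "open I" and s0I: "s0 \<in> I"
  and dX: "\<And>s. s\<in>I \<Longrightarrow> (X has_vector_derivative X1 s) (at s)"
  and dX1: "\<And>s. s\<in>I \<Longrightarrow> (X1 has_vector_derivative X2 s) (at s)"
  and contX2: "\<And>s. s\<in>I \<Longrightarrow> isCont X2 s"
  and unit: "\<And>s. s\<in>I \<Longrightarrow> norm (X1 s) = 1"
  and inj: "inj_on X I"
  and conv: "convex_curve I X"
  and kpos: "curvature I X s0 > 0"
begin

lemma D1_eq: "s \<in> I \<Longrightarrow> D1 X s = X1 s"
  unfolding D1_def using dX by (simp add: vector_derivative_at)

lemma D2_eq: "s \<in> I \<Longrightarrow> D2 X s = X2 s"
proof -
  assume s: "s \<in> I"
  have "(D1 X has_vector_derivative X2 s) (at s)"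
    by (rule has_vector_derivative_transform_within_open[OF dX1[OF s] I_open s]) (simp add: D1_eq)
  then show ?thesis unfolding D2_def by (simp add: vector_derivative_at)
qed

definition "T0 = X1 s0"
definition "R0 = rot90 T0"
definition "N0 = normal I X s0"
definition "\<kappa> = curvature I X s0"
definition "sg = N0 \<bullet> R0"
definition "u s = (X s - X s0) \<bullet> T0"
definition "v s = (X s - X s0) \<bullet> N0"
definition "p s = X1 s \<bullet> T0"
definition "q s = X1 s \<bullet> N0"

lemma T0_norm: "norm T0 = 1" using unit s0I by (simp add: T0_def)
lemma R0_norm: "norm R0 = 1" using T0_norm by (simp add: R0_def rot90_norm)
lemma N0_cases: "N0 = R0 \<or> N0 = - R0"
  by (simp add: N0_def R0_def normal_def D1_eq s0I T0_def)
lemma sg_cases: "sg = 1 \<or> sg = -1"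
  using N0_cases R0_norm by (auto simp: sg_def inner_minus_left dot_square_norm)
lemma sg_sq: "sg * sg = 1" using sg_cases by auto
lemma R0_sg: "R0 = sg *\<^sub>R N0"
  using N0_cases R0_norm by (auto simp: sg_def dot_square_norm)
lemma N0_sg: "N0 = sg *\<^sub>R R0"
  using N0_cases R0_norm by (auto simp: sg_def dot_square_norm)
lemma inner_R0: "x \<bullet> R0 = sg * (x \<bullet> N0)" by (simp add: R0_sg)
lemma T0T0: "T0 \<bullet> T0 = 1" using T0_norm by (simp add: dot_square_norm)
lemma T0N0: "T0 \<bullet> N0 = 0" by (simp add: N0_sg R0_def)

lemma decompN: "x = (x \<bullet> T0) *\<^sub>R T0 + (x \<bullet> N0) *\<^sub>R N0"
proof -
  have "x = (x \<bullet> T0) *\<^sub>R T0 + (x \<bullet> R0) *\<^sub>R R0" unfolding R0_def by (rule decomp[OF T0_norm])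
  also have "(x \<bullet> R0) *\<^sub>R R0 = (x \<bullet> N0) *\<^sub>R N0"
    by (simp add: R0_sg sg_sq)
  finally show ?thesis .
qed

lemma cross2_N: "cross2 x y = sg * ((x \<bullet> T0) * (y \<bullet> N0) - (x \<bullet> N0) * (y \<bullet> T0))"
  using cross2_coord[OF T0_norm, of x y] by (simp add: R0_def[symmetric] inner_R0 algebra_simps)

lemma kappa_eq: "\<kappa> = X2 s0 \<bullet> N0"
  by (simp add: \<kappa>_def curvature_def D2_eq s0I N0_def)

lemma conv': "s \<in> I \<Longrightarrow> (\<forall>t\<in>I. (X t - X s) \<bullet> rot90 (X1 s) \<ge> 0) \<or> (\<forall>t\<in>I. (X t - X s) \<bullet> rot90 (X1 s) \<le> 0)"
  using conv by (simp add: convex_curve_def D1_eq)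

lemma v_nonneg: "t \<in> I \<Longrightarrow> v t \<ge> 0"
  using conv' [OF s0I] unfolding v_def N0_def normal_def
  by (auto simp: D1_eq s0I inner_minus_right)

lemma du: "s \<in> I \<Longrightarrow> (u has_real_derivative p s) (at s)"
proof -
  assume s: "s \<in> I"
  have "((\<lambda>s. X s \<bullet> T0 - X s0 \<bullet> T0) has_real_derivative (X1 s \<bullet> T0 - 0)) (at s)"
    by (intro DERIV_diff vd_inner dX s DERIV_const)
  moreover have "u = (\<lambda>s. X s \<bullet> T0 - X s0 \<bullet> T0)" by (rule ext) (simp add: u_def inner_diff_left)
  ultimately show ?thesis by (simp add: p_def)
qed

lemma dv: "s \<in> I \<Longrightarrow> (v has_real_derivative q s) (at s)"
proof -
  assume s: "s \<in> I"
  have "((\<lambda>s. X s \<bullet> N0 - X s0 \<bullet> N0) has_real_derivative (X1 s \<bullet> N0 - 0)) (at s)"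
    by (intro DERIV_diff vd_inner dX s DERIV_const)
  moreover have "v = (\<lambda>s. X s \<bullet> N0 - X s0 \<bullet> N0)" by (rule ext) (simp add: v_def inner_diff_left)
  ultimately show ?thesis by (simp add: q_def)
qed

lemma dq: "s \<in> I \<Longrightarrow> (q has_real_derivative (X2 s \<bullet> N0)) (at s)"
  unfolding q_def by (rule vd_inner[OF dX1])

lemma cont_p: "s \<in> I \<Longrightarrow> isCont p s"
  unfolding p_def by (intro continuous_intros has_vector_derivative_continuous[OF dX1])

lemma cont_X2N: "s \<in> I \<Longrightarrow> isCont (\<lambda>s. X2 s \<bullet> N0) s"
  by (intro continuous_intros contX2)

lemma u0: "u s0 = 0" by (simp add: u_def)
lemma v0: "v s0 = 0" by (simp add: v_def)
lemma p0: "p s0 = 1" by (simp add: p_def T0_def[symmetric] T0T0)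
lemma q0: "q s0 = 0" by (simp add: q_def T0_def[symmetric] T0N0)
lemma kappa_pos: "\<kappa> > 0" using kpos by (simp add: \<kappa>_def)

lemma exists_delta: "\<exists>\<delta>>0. \<forall>s. \<bar>s - s0\<bar> \<le> \<delta> \<longrightarrow> s \<in> I \<and> p s > 0 \<and> X2 s \<bullet> N0 > 0"
proof -
  have "eventually (\<lambda>s. p s > 0) (at s0)"
    using cont_p[OF s0I] p0 unfolding isCont_def by (auto dest: order_tendstoD(1)[where a=0])
  then obtain d1 where d1: "d1 > 0" "\<And>s. s \<noteq> s0 \<Longrightarrow> dist s s0 < d1 \<Longrightarrow> p s > 0"
    unfolding eventually_at by auto
  have "eventually (\<lambda>s. X2 s \<bullet> N0 > 0) (at s0)"
    using cont_X2N[OF s0I] kappa_pos kappa_eq unfolding isCont_def by (auto dest: order_tendstoD(1)[where a=0])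
  then obtain d2 where d2: "d2 > 0" "\<And>s. s \<noteq> s0 \<Longrightarrow> dist s s0 < d2 \<Longrightarrow> X2 s \<bullet> N0 > 0"
    unfolding eventually_at by auto
  obtain e where e: "e > 0" "ball s0 e \<subseteq> I" using I_open s0I open_contains_ball by blast
  define \<delta> where "\<delta> = min (min d1 d2) e / 2"
  have "\<delta> > 0" using d1 d2 e by (simp add: \<delta>_def)
  moreover have "s \<in> I \<and> p s > 0 \<and> X2 s \<bullet> N0 > 0" if "\<bar>s - s0\<bar> \<le> \<delta>" for s
  proof (cases "s = s0")
    case True then show ?thesis using s0I p0 kappa_pos kappa_eq by simp
  next
    case False
    have "dist s s0 < d1" "dist s s0 < d2" "dist s0 s < e"
      using that d1 d2 e False by (auto simp: \<delta>_def dist_real_def abs_minus_commute)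
    then show ?thesis using d1 d2 e False by auto
  qed
  ultimately show ?thesis by blast
qed

end

locale scc2 = scc +
  fixes \<delta> :: real
  assumes dpos: "\<delta> > 0"
  and dI: "\<And>s. \<bar>s - s0\<bar> \<le> \<delta> \<Longrightarrow> s \<in> I"
  and dp: "\<And>s. \<bar>s - s0\<bar> \<le> \<delta> \<Longrightarrow> p s > 0"
  and dk: "\<And>s. \<bar>s - s0\<bar> \<le> \<delta> \<Longrightarrow> X2 s \<bullet> N0 > 0"
begin

lemma q_pos: assumes "s0 < t" "t \<le> s0 + \<delta>" shows "q t > 0"
proof -
  have der: "\<And>x. s0 \<le> x \<Longrightarrow> x \<le> t \<Longrightarrow> DERIV q x :> X2 x \<bullet> N0"
    using assms by (intro dq dI) auto
  obtain z where z: "s0 < z" "z < t" "q t - q s0 = (t - s0) * (X2 z \<bullet> N0)"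
    using MVT2[OF assms(1) der] by blast
  have "X2 z \<bullet> N0 > 0" using dk z assms by auto
  then show ?thesis using z q0 assms by simp
qed

lemma q_neg: assumes "s0 - \<delta> \<le> t" "t < s0" shows "q t < 0"
proof -
  have der: "\<And>x. t \<le> x \<Longrightarrow> x \<le> s0 \<Longrightarrow> DERIV q x :> X2 x \<bullet> N0"
    using assms by (intro dq dI) auto
  obtain z where z: "t < z" "z < s0" "q s0 - q t = (s0 - t) * (X2 z \<bullet> N0)"
    using MVT2[OF assms(2) der] by blast
  have "X2 z \<bullet> N0 > 0" using dk z assms by auto
  then have "(s0 - t) * (X2 z \<bullet> N0) > 0" using assms by simp
  then show ?thesis using z q0 by linarith
qed

lemma v_inc: assumes "s0 \<le> a" "a < b" "b \<le> s0 + \<delta>" shows "v a < v b"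
proof -
  have der: "\<And>x. a \<le> x \<Longrightarrow> x \<le> b \<Longrightarrow> DERIV v x :> q x"
    using assms by (intro dv dI) auto
  obtain z where z: "a < z" "z < b" "v b - v a = (b - a) * q z"
    using MVT2[OF assms(2) der] by blast
  have "q z > 0" using q_pos z assms by auto
  then have "(b - a) * q z > 0" using assms by simp
  then show ?thesis using z by linarith
qed

lemma v_dec: assumes "s0 - \<delta> \<le> a" "a < b" "b \<le> s0" shows "v a > v b"
proof -
  have der: "\<And>x. a \<le> x \<Longrightarrow> x \<le> b \<Longrightarrow> DERIV v x :> q x"
    using assms by (intro dv dI) auto
  obtain z where z: "a < z" "z < b" "v b - v a = (b - a) * q z"
    using MVT2[OF assms(2) der] by blast
  have "q z < 0" using q_neg z assms by auto
  then have "(b - a) * q z < 0" using assms by (simp add: mult_pos_neg)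
  then show ?thesis using z by linarith
qed

lemma u_inc: assumes "s0 - \<delta> \<le> a" "a < b" "b \<le> s0 + \<delta>" shows "u a < u b"
proof -
  have der: "\<And>x. a \<le> x \<Longrightarrow> x \<le> b \<Longrightarrow> DERIV u x :> p x"
    using assms by (intro du dI) auto
  obtain z where z: "a < z" "z < b" "u b - u a = (b - a) * p z"
    using MVT2[OF assms(2) der] by blast
  have "p z > 0" using dp z assms by auto
  then have "(b - a) * p z > 0" using assms by simp
  then show ?thesis using z by linarith
qed

lemma cont_v: "s \<in> I \<Longrightarrow> isCont v s" using dv by (rule DERIV_isCont)

definition "h0 = min (v (s0 + \<delta>)) (v (s0 - \<delta>))"

lemma h0_pos: "h0 > 0"
  using v_inc[of s0 "s0+\<delta>"] v_dec[of "s0-\<delta>" s0] dpos v0 by (simp add: h0_def)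

definition "S2 h = (SOME s. s0 < s \<and> s < s0 + \<delta> \<and> v s = h)"
definition "S1 h = (SOME s. s0 - \<delta> < s \<and> s < s0 \<and> v s = h)"

lemma S2_prop: assumes "0 < h" "h < h0" shows "s0 < S2 h \<and> S2 h < s0 + \<delta> \<and> v (S2 h) = h"
proof -
  have "\<exists>s. s0 \<le> s \<and> s \<le> s0 + \<delta> \<and> v s = h"
  proof (rule IVT)
    show "v s0 \<le> h" using v0 assms by simp
    show "h \<le> v (s0 + \<delta>)" using assms by (simp add: h0_def)
    show "s0 \<le> s0 + \<delta>" using dpos by simp
    show "\<forall>x. s0 \<le> x \<and> x \<le> s0 + \<delta> \<longrightarrow> isCont v x" by (auto intro!: cont_v dI)
  qed
  then obtain s where s: "s0 \<le> s" "s \<le> s0 + \<delta>" "v s = h" by blast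
  have "s \<noteq> s0" using s assms v0 by auto
  moreover have "s \<noteq> s0 + \<delta>" using s assms by (auto simp: h0_def)
  ultimately have "\<exists>s. s0 < s \<and> s < s0 + \<delta> \<and> v s = h" using s by (intro exI[of _ s]) auto
  then show ?thesis unfolding S2_def by (rule someI_ex)
qed

lemma S1_prop: assumes "0 < h" "h < h0" shows "s0 - \<delta> < S1 h \<and> S1 h < s0 \<and> v (S1 h) = h"
proof -
  have "\<exists>s. s0 - \<delta> \<le> s \<and> s \<le> s0 \<and> v s = h"
  proof (rule IVT2)
    show "v s0 \<le> h" using v0 assms by simp
    show "h \<le> v (s0 - \<delta>)" using assms by (simp add: h0_def)
    show "s0 - \<delta> \<le> s0" using dpos by simp
    show "\<forall>x. s0 - \<delta> \<le> x \<and> x \<le> s0 \<longrightarrow> isCont v x" by (auto intro!: cont_v dI)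
  qed
  then obtain s where s: "s0 - \<delta> \<le> s" "s \<le> s0" "v s = h" by blast
  have "s \<noteq> s0" using s assms v0 by auto
  moreover have "s \<noteq> s0 - \<delta>" using s assms by (auto simp: h0_def)
  ultimately have "\<exists>s. s0 - \<delta> < s \<and> s < s0 \<and> v s = h" using s by (intro exI[of _ s]) auto
  then show ?thesis unfolding S1_def by (rule someI_ex)
qed

lemma N0T0: "N0 \<bullet> T0 = 0" using T0N0 by (simp add: inner_commute)

lemma N0N0: "N0 \<bullet> N0 = 1"
  using R0_norm sg_sq by (simp add: N0_sg dot_square_norm power2_eq_square)

lemma lin: assumes "v t = v m" shows "X t - X m = (u t - u m) *\<^sub>R T0"
proof -
  have "X t - X m = ((X t - X m) \<bullet> T0) *\<^sub>R T0 + ((X t - X m) \<bullet> N0) *\<^sub>R N0" by (rule decompN)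
  moreover have "(X t - X m) \<bullet> T0 = u t - u m" by (simp add: u_def inner_diff_left)
  moreover have "(X t - X m) \<bullet> N0 = 0" using assms by (simp add: v_def inner_diff_left)
  ultimately show ?thesis by simp
qed

lemma mid: assumes "a \<in> I" "m \<in> I" "c \<in> I" "v a = v m" "v c = v m" "u a < u m" "u m < u c"
  shows "q m = 0"
proof -
  define c0 where "c0 = T0 \<bullet> rot90 (X1 m)"
  have c0: "c0 = - (sg * q m)"
    by (simp add: c0_def rot90_inner_swap R0_def[symmetric] inner_commute[of R0] inner_R0 q_def)
  have e: "(X t - X m) \<bullet> rot90 (X1 m) = (u t - u m) * c0" if "v t = v m" for t
    using lin[OF that] by (simp add: c0_def)
  have "c0 = 0"
  proof (rule ccontr)
    assume "c0 \<noteq> 0"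
    then have "(u a - u m) * c0 > 0 \<and> (u c - u m) * c0 < 0 \<or> (u a - u m) * c0 < 0 \<and> (u c - u m) * c0 > 0"
      using assms(6,7) by (cases "c0 > 0") (auto simp: mult_neg_pos mult_neg_neg mult_pos_neg)
    then show False using conv'[OF assms(2)] e[OF assms(4)] e[OF assms(5)] assms(1,3) by force
  qed
  then show ?thesis using c0 sg_cases by auto
qed

lemma flat: assumes "m \<in> I" "q m = 0" "v m = h" "0 < h" "h < h0" shows False
proof -
  have X1m: "X1 m = p m *\<^sub>R T0" using decompN[of "X1 m"] assms(2) by (simp add: p_def q_def)
  have "p m \<noteq> 0" using unit[OF assms(1)] X1m by auto
  define k where "k = p m * sg"
  have k: "k \<noteq> 0" using \<open>p m \<noteq> 0\<close> sg_cases by (auto simp: k_def)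
  have e: "(X t - X m) \<bullet> rot90 (X1 m) = k * (v t - h)" for t
    using assms(3) by (simp add: X1m rot90_linear R0_def[symmetric] inner_R0 k_def v_def inner_diff_left)
  have w: "v (s0 + \<delta>) - h > 0" using assms h0_def by simp
  have "k * (0 - h) > 0 \<and> k * (v (s0 + \<delta>) - h) < 0 \<or> k * (0 - h) < 0 \<and> k * (v (s0 + \<delta>) - h) > 0"
    using k w assms(4) by (cases "k > 0") (auto simp: mult_neg_pos mult_neg_neg mult_pos_neg)
  then show False using conv'[OF assms(1)] e[of s0] e[of "s0 + \<delta>"] s0I dI[of "s0 + \<delta>"] dpos v0
    by force
qed

lemma meet_char: assumes "0 < h" "h < h0" "s \<in> I" "v s = h" shows "s = S1 h \<or> s = S2 h"
proof (rule ccontr)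
  assume ne: "\<not> (s = S1 h \<or> s = S2 h)"
  let ?a = "S1 h" and ?b = "S2 h"
  have a: "s0 - \<delta> < ?a" "?a < s0" "v ?a = h" and b: "s0 < ?b" "?b < s0 + \<delta>" "v ?b = h"
    using S1_prop[OF assms(1,2)] S2_prop[OF assms(1,2)] by auto
  have aI: "?a \<in> I" and bI: "?b \<in> I" using a b dI by auto
  have uab: "u ?a < u ?b" using a b by (intro u_inc) auto
  have qa: "q ?a < 0" using a by (intro q_neg) auto
  have qb: "q ?b > 0" using b by (intro q_pos) auto
  have "u s \<noteq> u ?a"
  proof
    assume "u s = u ?a"
    then have "X s = X ?a" using lin[of s ?a] a assms by simp
    then show False using inj assms(3) aI ne unfolding inj_on_def by blast
  qed
  moreover have "u s \<noteq> u ?b"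
  proof
    assume "u s = u ?b"
    then have "X s = X ?b" using lin[of s ?b] b assms by simp
    then show False using inj assms(3) bI ne unfolding inj_on_def by blast
  qed
  ultimately consider "u s < u ?a" | "u ?a < u s" "u s < u ?b" | "u ?b < u s" by linarith
  then show False
  proof cases
    case 1
    then have "q ?a = 0" using mid[of s ?a ?b] assms aI bI a b uab by auto
    then show False using qa by simp
  next
    case 2
    then have "q s = 0" using mid[of ?a s ?b] assms aI bI a b by auto
    then show False using flat assms by blast
  next
    case 3
    then have "q ?b = 0" using mid[of ?a ?b s] assms aI bI a b uab by auto
    then show False using qb by simp
  qed
qed

lemma line_mem: "x \<in> line_thru (X s0 + h *\<^sub>R N0) T0 \<longleftrightarrow> (x - X s0) \<bullet> N0 = h"
proof
  assume "x \<in> line_thru (X s0 + h *\<^sub>R N0) T0"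
  then obtain t where "x = X s0 + h *\<^sub>R N0 + t *\<^sub>R T0" unfolding line_thru_def by blast
  then show "(x - X s0) \<bullet> N0 = h" by (simp add: inner_add_left N0N0 N0T0 T0N0)
next
  assume a: "(x - X s0) \<bullet> N0 = h"
  have "x - X s0 = ((x - X s0) \<bullet> T0) *\<^sub>R T0 + ((x - X s0) \<bullet> N0) *\<^sub>R N0" by (rule decompN)
  then have "x = X s0 + h *\<^sub>R N0 + ((x - X s0) \<bullet> T0) *\<^sub>R T0" using a by (simp add: algebra_simps)
  then show "x \<in> line_thru (X s0 + h *\<^sub>R N0) T0" unfolding line_thru_def by blast
qed

lemma meet_set_eq: assumes "0 < h" "h < h0"
  shows "meet_set I X s0 h = {X (S1 h), X (S2 h)}"
proof -
  have a: "S1 h \<in> I" "v (S1 h) = h" and b: "S2 h \<in> I" "v (S2 h) = h"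
    using S1_prop[OF assms] S2_prop[OF assms] dI by auto
  have "meet_set I X s0 h = X ` I \<inter> line_thru (X s0 + h *\<^sub>R N0) T0"
    by (simp add: meet_set_def N0_def D1_eq s0I T0_def)
  also have "\<dots> = {X (S1 h), X (S2 h)}"
  proof
    show "X ` I \<inter> line_thru (X s0 + h *\<^sub>R N0) T0 \<subseteq> {X (S1 h), X (S2 h)}"
    proof
      fix x assume "x \<in> X ` I \<inter> line_thru (X s0 + h *\<^sub>R N0) T0"
      then obtain s where s: "s \<in> I" "x = X s" "v s = h" by (auto simp: line_mem v_def)
      then show "x \<in> {X (S1 h), X (S2 h)}" using meet_char[OF assms s(1,3)] by auto
    qed
    show "{X (S1 h), X (S2 h)} \<subseteq> X ` I \<inter> line_thru (X s0 + h *\<^sub>R N0) T0"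
      using a b by (auto simp: line_mem v_def)
  qed
  finally show ?thesis .
qed

lemma S12_ne: assumes "0 < h" "h < h0" shows "X (S1 h) \<noteq> X (S2 h)"
proof -
  have "S1 h \<noteq> S2 h" "S1 h \<in> I" "S2 h \<in> I" using S1_prop[OF assms] S2_prop[OF assms] dI by auto
  then show ?thesis using inj unfolding inj_on_def by blast
qed

lemma T_formula: assumes "v a = h" "v b = h"
  shows "tri_area (X s0) (X a) (X b) = \<bar>h\<bar> * \<bar>u b - u a\<bar> / 2"
proof -
  have "cross2 (X a - X s0) (X b - X s0) = sg * (u a * h - h * u b)"
    using assms by (simp add: cross2_N u_def[symmetric] v_def[symmetric])
  also have "\<dots> = sg * (h * (u a - u b))" by (simp add: algebra_simps)
  finally have "\<bar>cross2 (X a - X s0) (X b - X s0)\<bar> = \<bar>sg\<bar> * (\<bar>h\<bar> * \<bar>u a - u b\<bar>)"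
    by (simp add: abs_mult)
  then have "\<bar>cross2 (X a - X s0) (X b - X s0)\<bar> = \<bar>h\<bar> * \<bar>u b - u a\<bar>"
    using sg_cases by (auto simp: abs_minus_commute)
  then show ?thesis by (simp add: tri_area_def)
qed

lemma U_formula:
  assumes "a \<in> I" "b \<in> I" "v a = h" "v b = h" "q a \<noteq> 0" "q b \<noteq> 0"
    "p a * q b - q a * p b \<noteq> 0"
  shows "tri_area (line_meet (X a) (X1 a) (X b) (X1 b)) (line_meet (X s0) T0 (X a) (X1 a))
          (line_meet (X s0) T0 (X b) (X1 b))
    = \<bar>h + (u b - u a) * q b / (p a * q b - q a * p b) * q a\<bar> *
      \<bar>(u b - h * p b / q b) - (u a - h * p a / q a)\<bar> / 2"
proof -
  define D where "D = p a * q b - q a * p b"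
  define \<tau> where "\<tau> = (u b - u a) * q b / D"
  define ta where "ta = u a - h * p a / q a"
  define tb where "tb = u b - h * p b / q b"
  define y where "y = h + \<tau> * q a"
  have sg0: "sg \<noteq> 0" using sg_cases by auto
  have XaT: "(X s0 - X a) \<bullet> T0 = - u a" and XaN: "(X s0 - X a) \<bullet> N0 = - h"
    using assms by (simp_all add: u_def v_def inner_diff_left)
  have XbT: "(X s0 - X b) \<bullet> T0 = - u b" and XbN: "(X s0 - X b) \<bullet> N0 = - h"
    using assms by (simp_all add: u_def v_def inner_diff_left)
  have c1: "cross2 (X1 a) (X1 b) = sg * D" by (simp add: cross2_N D_def p_def q_def)
  have c2a: "cross2 T0 (X1 a) = sg * q a" by (simp add: cross2_N T0T0 T0N0 p_def q_def)
  have c2b: "cross2 T0 (X1 b) = sg * q b" by (simp add: cross2_N T0T0 T0N0 p_def q_def)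
  have c3a: "cross2 (X a - X s0) (X1 a) = sg * (u a * q a - h * p a)"
    using assms by (simp add: cross2_N u_def[symmetric] v_def[symmetric] p_def q_def)
  have c3b: "cross2 (X b - X s0) (X1 b) = sg * (u b * q b - h * p b)"
    using assms by (simp add: cross2_N u_def[symmetric] v_def[symmetric] p_def q_def)
  have c4: "cross2 (X b - X a) (X1 b) = sg * ((u b - u a) * q b)"
  proof -
    have "(X b - X a) \<bullet> T0 = u b - u a" "(X b - X a) \<bullet> N0 = 0"
      using assms by (simp_all add: u_def v_def inner_diff_left)
    then show ?thesis by (simp add: cross2_N p_def q_def)
  qed
  have B: "line_meet (X a) (X1 a) (X b) (X1 b) = X a + \<tau> *\<^sub>R X1 a"
    using line_meet_eq[of "X1 a" "X1 b" "X a" "X b"] c1 c4 sg0 assms(7)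
    by (simp add: \<tau>_def D_def[symmetric])
  have B1: "line_meet (X s0) T0 (X a) (X1 a) = X s0 + ta *\<^sub>R T0"
    using line_meet_eq[of T0 "X1 a" "X s0" "X a"] c2a c3a sg0 assms(5)
    by (simp add: ta_def field_simps)
  have B2: "line_meet (X s0) T0 (X b) (X1 b) = X s0 + tb *\<^sub>R T0"
    using line_meet_eq[of T0 "X1 b" "X s0" "X b"] c2b c3b sg0 assms(6)
    by (simp add: tb_def field_simps)
  have d1: "X s0 + ta *\<^sub>R T0 - (X a + \<tau> *\<^sub>R X1 a) = (X s0 - X a) + ta *\<^sub>R T0 - \<tau> *\<^sub>R X1 a"
    by (simp add: algebra_simps)
  have d2: "X s0 + tb *\<^sub>R T0 - (X a + \<tau> *\<^sub>R X1 a) = (X s0 - X a) + tb *\<^sub>R T0 - \<tau> *\<^sub>R X1 a"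
    by (simp add: algebra_simps)
  define w where "w = X s0 - X a"
  have wT: "w \<bullet> T0 = - u a" and wN: "w \<bullet> N0 = - h" using XaT XaN by (simp_all add: w_def)
  have "cross2 (w + ta *\<^sub>R T0 - \<tau> *\<^sub>R X1 a) (w + tb *\<^sub>R T0 - \<tau> *\<^sub>R X1 a)
      = sg * (y * (tb - ta))"
    unfolding cross2_N
    by (simp add: inner_add_left inner_diff_left wT wN T0T0 T0N0 p_def[symmetric] q_def[symmetric] y_def)
       (simp add: algebra_simps)
  then have "tri_area (X a + \<tau> *\<^sub>R X1 a) (X s0 + ta *\<^sub>R T0) (X s0 + tb *\<^sub>R T0) = \<bar>y\<bar> * \<bar>tb - ta\<bar> / 2"
    using sg_cases unfolding tri_area_def d1 d2 w_def by (auto simp: abs_mult)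
  then show ?thesis unfolding B B1 B2 y_def \<tau>_def D_def ta_def tb_def by simp
qed

lemma A12_cases: assumes "0 < h" "h < h0"
  shows "A12 I X s0 h = (X (S1 h), X (S2 h)) \<or> A12 I X s0 h = (X (S2 h), X (S1 h))"
proof -
  let ?P = "\<lambda>(a1, a2). a1 \<noteq> a2 \<and> meet_set I X s0 h = {a1, a2}"
  have "?P (X (S1 h), X (S2 h))" using meet_set_eq[OF assms] S12_ne[OF assms] by simp
  then have "?P (A12 I X s0 h)" unfolding A12_def by (rule someI)
  moreover obtain a1 a2 where e: "A12 I X s0 h = (a1, a2)" by fastforce
  ultimately have "{a1, a2} = {X (S1 h), X (S2 h)}" using meet_set_eq[OF assms] by simp
  then show ?thesis using e by (auto simp: doubleton_eq_iff)
qed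

lemma param_eq: "a \<in> I \<Longrightarrow> param I X (X a) = a"
  unfolding param_def by (rule the_equality) (use inj in \<open>auto simp: inj_on_def\<close>)

lemma T_eq: assumes "0 < h" "h < h0"
  shows "T_area I X s0 h = h * \<bar>u (S2 h) - u (S1 h)\<bar> / 2"
proof -
  have v: "v (S1 h) = h" "v (S2 h) = h" using S1_prop[OF assms] S2_prop[OF assms] by auto
  show ?thesis using A12_cases[OF assms] T_formula[OF v] T_formula[OF v(2,1)] assms
    by (auto simp: T_area_def abs_minus_commute)
qed

definition "Uf h a b = \<bar>h + (u b - u a) * q b / (p a * q b - q a * p b) * q a\<bar> *
      \<bar>(u b - h * p b / q b) - (u a - h * p a / q a)\<bar> / 2"

lemma Uf_sym: "Uf h a b = Uf h b a"
proof -
  have k: "(u a - u b) * q a / (p b * q a - q b * p a) * q b = (u b - u a) * q b / (p a * q b - q a * p b) * q a"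
    by (rule kk)
  have e3: "(u a - h * p a / q a) - (u b - h * p b / q b) = - ((u b - h * p b / q b) - (u a - h * p a / q a))"
    by simp
  show ?thesis unfolding Uf_def k e3 abs_minus_cancel ..
qed

lemma U_eq: assumes "0 < h" "h < h0"
  shows "U_area I X s0 h = Uf h (S1 h) (S2 h)"
proof -
  have a: "s0 - \<delta> < S1 h" "S1 h < s0" "v (S1 h) = h" and b: "s0 < S2 h" "S2 h < s0 + \<delta>" "v (S2 h) = h"
    using S1_prop[OF assms] S2_prop[OF assms] by auto
  have aI: "S1 h \<in> I" and bI: "S2 h \<in> I" using a b dI by auto
  have qa: "q (S1 h) < 0" using a by (intro q_neg) auto
  have qb: "q (S2 h) > 0" using b by (intro q_pos) auto
  have pa: "p (S1 h) > 0" using a by (intro dp) auto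
  have pb: "p (S2 h) > 0" using b by (intro dp) auto
  have D: "p (S1 h) * q (S2 h) - q (S1 h) * p (S2 h) > 0"
    using pa pb qa qb by (smt (verit) mult_pos_pos mult_neg_pos)
  have D': "p (S2 h) * q (S1 h) - q (S2 h) * p (S1 h) \<noteq> 0" using D by (simp add: algebra_simps)
  have U1: "tri_area (line_meet (X a) (X1 a) (X b) (X1 b)) (line_meet (X s0) T0 (X a) (X1 a))
          (line_meet (X s0) T0 (X b) (X1 b)) = Uf h a b"
    if "a \<in> I" "b \<in> I" "v a = h" "v b = h" "q a \<noteq> 0" "q b \<noteq> 0" "p a * q b - q a * p b \<noteq> 0" for a b
    using U_formula[OF that] by (simp add: Uf_def)
  from A12_cases[OF assms] show ?thesis
  proof
    assume e: "A12 I X s0 h = (X (S1 h), X (S2 h))"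
    show ?thesis using U1[of "S1 h" "S2 h"] aI bI a b qa qb D
      by (simp add: U_area_def e Let_def param_eq D1_eq s0I T0_def)
  next
    assume e: "A12 I X s0 h = (X (S2 h), X (S1 h))"
    show ?thesis using U1[of "S2 h" "S1 h"] aI bI a b qa qb D' Uf_sym
      by (simp add: U_area_def e Let_def param_eq D1_eq s0I T0_def)
  qed
qed

lemma LA1: "((\<lambda>\<sigma>. u (s0 + \<sigma>) / \<sigma>) \<longlongrightarrow> 1) (at 0)"
  using DERIV_D[OF du[OF s0I]] by (simp add: u0 p0)

lemma LA2: "((\<lambda>\<sigma>. q (s0 + \<sigma>) / \<sigma>) \<longlongrightarrow> \<kappa>) (at 0)"
  using DERIV_D[OF dq[OF s0I]] by (simp add: q0 kappa_eq)

lemma LA3: "((\<lambda>\<sigma>. p (s0 + \<sigma>)) \<longlongrightarrow> 1) (at 0)"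
  using cont_p[OF s0I] by (simp add: isCont_iff p0)

lemma ev_small: "eventually (\<lambda>\<sigma>. \<bar>\<sigma>\<bar> < \<delta>) (at (0::real))"
  unfolding eventually_at using dpos by (auto simp: dist_real_def)

lemma LA4: "((\<lambda>\<sigma>. v (s0 + \<sigma>) / \<sigma>^2) \<longlongrightarrow> \<kappa> / 2) (at 0)"
proof (rule lhopital[where f' = "\<lambda>\<sigma>. q (s0 + \<sigma>)" and g' = "\<lambda>\<sigma>. 2 * \<sigma>"])
  show "((\<lambda>\<sigma>. v (s0 + \<sigma>)) \<longlongrightarrow> 0) (at 0)"
    using cont_v[OF s0I] by (simp add: isCont_iff v0)
  show "((\<lambda>\<sigma>::real. \<sigma>^2) \<longlongrightarrow> 0) (at 0)"
    by (auto intro!: tendsto_eq_intros)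
  show "eventually (\<lambda>\<sigma>::real. \<sigma>^2 \<noteq> 0) (at 0)"
    unfolding eventually_at by (auto intro: exI[of _ 1])
  show "eventually (\<lambda>\<sigma>::real. 2 * \<sigma> \<noteq> 0) (at 0)"
    unfolding eventually_at by (auto intro: exI[of _ 1])
  show "eventually (\<lambda>\<sigma>. DERIV (\<lambda>\<sigma>. v (s0 + \<sigma>)) \<sigma> :> q (s0 + \<sigma>)) (at 0)"
    using ev_small
  proof eventually_elim
    case (elim \<sigma>)
    then have "s0 + \<sigma> \<in> I" by (intro dI) auto
    have "DERIV (\<lambda>\<sigma>. v (s0 + \<sigma>)) \<sigma> :> q (s0 + \<sigma>) * 1"
      by (rule DERIV_chain2[where g="\<lambda>\<sigma>. s0 + \<sigma>", OF dv[OF \<open>s0 + \<sigma> \<in> I\<close>]]) (auto intro!: derivative_eq_intros)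
    then show ?case by simp
  qed
  show "eventually (\<lambda>\<sigma>. DERIV (\<lambda>\<sigma>::real. \<sigma>^2) \<sigma> :> 2 * \<sigma>) (at 0)"
  proof (intro always_eventually allI)
    fix \<sigma> :: real
    have "DERIV (\<lambda>\<sigma>::real. \<sigma>^2) \<sigma> :> real 2 * \<sigma>^(2 - Suc 0)" by (rule DERIV_pow)
    then show "DERIV (\<lambda>\<sigma>::real. \<sigma>^2) \<sigma> :> 2 * \<sigma>" by simp
  qed
  have "((\<lambda>\<sigma>. (q (s0 + \<sigma>) / \<sigma>) / 2) \<longlongrightarrow> \<kappa> / 2) (at 0)"
    by (intro tendsto_divide LA2) auto
  moreover have "(\<lambda>\<sigma>. (q (s0 + \<sigma>) / \<sigma>) / 2) = (\<lambda>\<sigma>. q (s0 + \<sigma>) / (2 * \<sigma>))"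
    by (rule ext) simp
  ultimately show "((\<lambda>\<sigma>. q (s0 + \<sigma>) / (2 * \<sigma>)) \<longlongrightarrow> \<kappa> / 2) (at 0)" by simp
qed

lemma ev_h: "eventually (\<lambda>h. 0 < h \<and> h < h0) (at_right 0)"
  using eventually_at_right_real[OF h0_pos] by simp

lemma S2_lim: "((\<lambda>h. S2 h - s0) \<longlongrightarrow> 0) (at_right 0)"
proof (rule tendstoI)
  fix e :: real assume e: "e > 0"
  define e' where "e' = min (e/2) \<delta>"
  have e': "0 < e'" "e' \<le> \<delta>" "e' < e" using e dpos by (auto simp: e'_def)
  have vpos: "v (s0 + e') > 0" using v_inc[of s0 "s0 + e'"] e' v0 by simp
  have "eventually (\<lambda>h. 0 < h \<and> h < min h0 (v (s0 + e'))) (at_right 0)"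
    using eventually_at_right_real[of 0 "min h0 (v (s0 + e'))"] h0_pos vpos by simp
  then show "eventually (\<lambda>h. dist (S2 h - s0) 0 < e) (at_right 0)"
  proof eventually_elim
    case (elim h)
    then have h: "0 < h" "h < h0" "h < v (s0 + e')" by auto
    have b: "s0 < S2 h" "S2 h < s0 + \<delta>" "v (S2 h) = h" using S2_prop[OF h(1,2)] by auto
    have "S2 h < s0 + e'"
    proof (rule ccontr)
      assume "\<not> S2 h < s0 + e'"
      then have "v (s0 + e') \<le> v (S2 h)"
        using v_inc[of "s0 + e'" "S2 h"] b e' by (cases "S2 h = s0 + e'") auto
      then show False using h b by simp
    qed
    then show ?case using b e' by (simp add: dist_real_def)
  qed
qed

lemma S1_lim: "((\<lambda>h. S1 h - s0) \<longlongrightarrow> 0) (at_right 0)"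
proof (rule tendstoI)
  fix e :: real assume e: "e > 0"
  define e' where "e' = min (e/2) \<delta>"
  have e': "0 < e'" "e' \<le> \<delta>" "e' < e" using e dpos by (auto simp: e'_def)
  have vpos: "v (s0 - e') > 0" using v_dec[of "s0 - e'" s0] e' v0 by simp
  have "eventually (\<lambda>h. 0 < h \<and> h < min h0 (v (s0 - e'))) (at_right 0)"
    using eventually_at_right_real[of 0 "min h0 (v (s0 - e'))"] h0_pos vpos by simp
  then show "eventually (\<lambda>h. dist (S1 h - s0) 0 < e) (at_right 0)"
  proof eventually_elim
    case (elim h)
    then have h: "0 < h" "h < h0" "h < v (s0 - e')" by auto
    have a: "s0 - \<delta> < S1 h" "S1 h < s0" "v (S1 h) = h" using S1_prop[OF h(1,2)] by auto
    have "S1 h > s0 - e'"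
    proof (rule ccontr)
      assume "\<not> S1 h > s0 - e'"
      then have "v (s0 - e') \<le> v (S1 h)"
        using v_dec[of "S1 h" "s0 - e'"] a e' by (cases "S1 h = s0 - e'") auto
      then show False using h a by simp
    qed
    then show ?case using a e' by (simp add: dist_real_def)
  qed
qed

lemma f2: "filterlim (\<lambda>h. S2 h - s0) (at 0) (at_right 0)"
proof (rule filterlim_atI[OF S2_lim])
  show "eventually (\<lambda>h. S2 h - s0 \<noteq> 0) (at_right 0)"
    using ev_h
  proof eventually_elim
    case (elim h) then show ?case using S2_prop[of h] by auto
  qed
qed

lemma f1: "filterlim (\<lambda>h. S1 h - s0) (at 0) (at_right 0)"
proof (rule filterlim_atI[OF S1_lim])
  show "eventually (\<lambda>h. S1 h - s0 \<noteq> 0) (at_right 0)"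
    using ev_h
  proof eventually_elim
    case (elim h) then show ?case using S1_prop[of h] by auto
  qed
qed

definition "c = sqrt 2 / sqrt \<kappa>"

lemma c_pos: "c > 0" using kappa_pos by (simp add: c_def)
lemma c_sq: "\<kappa> * (c * c) = 2" using kappa_pos by (simp add: c_def)
lemma c_alt: "1 / sqrt (\<kappa> / 2) = c" by (simp add: c_def real_sqrt_divide)

lemma S2_ratio: "((\<lambda>h. (S2 h - s0) / sqrt h) \<longlongrightarrow> c) (at_right 0)"
proof -
  have "((\<lambda>h. v (s0 + (S2 h - s0)) / (S2 h - s0)^2) \<longlongrightarrow> \<kappa>/2) (at_right 0)"
    by (rule filterlim_compose[OF LA4 f2])
  moreover have "eventually (\<lambda>h. v (s0 + (S2 h - s0)) / (S2 h - s0)^2 = h / (S2 h - s0)^2) (at_right 0)"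
    using ev_h by eventually_elim (use S2_prop in auto)
  ultimately have L: "((\<lambda>h. h / (S2 h - s0)^2) \<longlongrightarrow> \<kappa>/2) (at_right 0)"
    by (rule Lim_transform_eventually)
  have "((\<lambda>h. 1 / sqrt (h / (S2 h - s0)^2)) \<longlongrightarrow> 1 / sqrt (\<kappa>/2)) (at_right 0)"
    using kappa_pos by (intro tendsto_divide tendsto_const tendsto_real_sqrt L) auto
  moreover have "eventually (\<lambda>h. 1 / sqrt (h / (S2 h - s0)^2) = (S2 h - s0) / sqrt h) (at_right 0)"
    using ev_h
  proof eventually_elim
    case (elim h)
    then have "S2 h - s0 > 0" using S2_prop by auto
    then show ?case by (simp add: real_sqrt_divide real_sqrt_abs)
  qed
  ultimately show ?thesis unfolding c_alt by (rule Lim_transform_eventually)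
qed

lemma S1_ratio: "((\<lambda>h. (S1 h - s0) / sqrt h) \<longlongrightarrow> - c) (at_right 0)"
proof -
  have "((\<lambda>h. v (s0 + (S1 h - s0)) / (S1 h - s0)^2) \<longlongrightarrow> \<kappa>/2) (at_right 0)"
    by (rule filterlim_compose[OF LA4 f1])
  moreover have "eventually (\<lambda>h. v (s0 + (S1 h - s0)) / (S1 h - s0)^2 = h / (S1 h - s0)^2) (at_right 0)"
    using ev_h
  proof eventually_elim
    case (elim h) then show ?case using S1_prop[of h] by auto
  qed
  ultimately have L: "((\<lambda>h. h / (S1 h - s0)^2) \<longlongrightarrow> \<kappa>/2) (at_right 0)"
    by (rule Lim_transform_eventually)
  have "((\<lambda>h. - (1 / sqrt (h / (S1 h - s0)^2))) \<longlongrightarrow> - (1 / sqrt (\<kappa>/2))) (at_right 0)"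
    using kappa_pos by (intro tendsto_minus tendsto_divide tendsto_const tendsto_real_sqrt L) auto
  moreover have "eventually (\<lambda>h. - (1 / sqrt (h / (S1 h - s0)^2)) = (S1 h - s0) / sqrt h) (at_right 0)"
    using ev_h
  proof eventually_elim
    case (elim h)
    then have "S1 h - s0 < 0" using S1_prop[of h] by auto
    then show ?case by (simp add: real_sqrt_divide real_sqrt_abs minus_divide_left)
  qed
  ultimately show ?thesis unfolding c_alt by (rule Lim_transform_eventually)
qed

lemma gen_ratio:
  assumes "((\<lambda>\<sigma>. f (s0 + \<sigma>) / \<sigma>) \<longlongrightarrow> L) (at 0)"
    and "filterlim (\<lambda>h. S h - s0) (at 0) (at_right 0)"
    and "((\<lambda>h. (S h - s0) / sqrt h) \<longlongrightarrow> M) (at_right 0)"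
  shows "((\<lambda>h. f (S h) / sqrt h) \<longlongrightarrow> L * M) (at_right 0)"
proof -
  have "((\<lambda>h. f (s0 + (S h - s0)) / (S h - s0)) \<longlongrightarrow> L) (at_right 0)"
    by (rule filterlim_compose[OF assms(1,2)])
  then have "((\<lambda>h. f (S h) / (S h - s0) * ((S h - s0) / sqrt h)) \<longlongrightarrow> L * M) (at_right 0)"
    using assms(3) by (intro tendsto_mult) auto
  moreover have "eventually (\<lambda>h. S h - s0 \<noteq> 0) (at_right 0)"
    using assms(2) by (simp add: filterlim_at)
  then have "eventually (\<lambda>h. f (S h) / (S h - s0) * ((S h - s0) / sqrt h) = f (S h) / sqrt h) (at_right 0)"
    by eventually_elim simp
  ultimately show ?thesis by (rule Lim_transform_eventually)
qed

lemma U2_lim: "((\<lambda>h. u (S2 h) / sqrt h) \<longlongrightarrow> c) (at_right 0)"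
  using gen_ratio[OF LA1 f2 S2_ratio] by simp
lemma U1_lim: "((\<lambda>h. u (S1 h) / sqrt h) \<longlongrightarrow> - c) (at_right 0)"
  using gen_ratio[OF LA1 f1 S1_ratio] by simp
lemma Q2_lim: "((\<lambda>h. q (S2 h) / sqrt h) \<longlongrightarrow> \<kappa> * c) (at_right 0)"
  using gen_ratio[OF LA2 f2 S2_ratio] by simp
lemma Q1_lim: "((\<lambda>h. q (S1 h) / sqrt h) \<longlongrightarrow> - (\<kappa> * c)) (at_right 0)"
  using gen_ratio[OF LA2 f1 S1_ratio] by simp
lemma P2_lim: "((\<lambda>h. p (S2 h)) \<longlongrightarrow> 1) (at_right 0)"
  using filterlim_compose[OF LA3 f2] by simp
lemma P1_lim: "((\<lambda>h. p (S1 h)) \<longlongrightarrow> 1) (at_right 0)"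
  using filterlim_compose[OF LA3 f1] by simp

lemma T_lim: "((\<lambda>h. T_area I X s0 h / (h * sqrt h)) \<longlongrightarrow> c) (at_right 0)"
proof -
  have L: "((\<lambda>h. \<bar>u (S2 h) / sqrt h - u (S1 h) / sqrt h\<bar> / 2) \<longlongrightarrow> \<bar>c - - c\<bar> / 2) (at_right 0)"
    by (intro tendsto_intros U2_lim U1_lim) simp
  have V: "\<bar>c - - c\<bar> / 2 = c" using c_pos by simp
  have E: "eventually (\<lambda>h. \<bar>u (S2 h) / sqrt h - u (S1 h) / sqrt h\<bar> / 2 = T_area I X s0 h / (h * sqrt h)) (at_right 0)"
    using ev_h
  proof eventually_elim
    case (elim h)
    then have h: "0 < h" "h < h0" "sqrt h > 0" by auto
    have "T_area I X s0 h / (h * sqrt h) = \<bar>u (S2 h) - u (S1 h)\<bar> / sqrt h / 2"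
      using T_eq[OF h(1,2)] h by (simp add: field_simps)
    then show ?case using h by (simp add: diff_divide_distrib[symmetric] abs_divide)
  qed
  show ?thesis using Lim_transform_eventually[OF L[unfolded V] E] .
qed

lemma U_lim: "((\<lambda>h. U_area I X s0 h / (h * sqrt h)) \<longlongrightarrow> c / 2) (at_right 0)"
proof -
  define G where "G = (\<lambda>U1 U2 P1 P2 Q1 Q2::real. \<bar>1 + (U2 - U1) * Q2 / (P1*Q2 - Q1*P2) * Q1\<bar> *
         \<bar>(U2 - P2/Q2) - (U1 - P1/Q1)\<bar> / 2)"
  have kc: "\<kappa> * c \<noteq> 0" using kappa_pos c_pos by simp
  have L: "((\<lambda>h. G (u (S1 h) / sqrt h) (u (S2 h) / sqrt h) (p (S1 h)) (p (S2 h)) (q (S1 h) / sqrt h) (q (S2 h) / sqrt h))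
     \<longlongrightarrow> G (-c) c 1 1 (-(\<kappa>*c)) (\<kappa>*c)) (at_right 0)"
    unfolding G_def
  proof (rule G_tendsto[OF U1_lim U2_lim P1_lim P2_lim Q1_lim Q2_lim])
    show "- (\<kappa> * c) \<noteq> 0" "\<kappa> * c \<noteq> 0" using kc by simp_all
    have "1 * (\<kappa> * c) - - (\<kappa> * c) * 1 = 2 * (\<kappa> * c)" by simp
    then show "1 * (\<kappa> * c) - - (\<kappa> * c) * 1 \<noteq> 0" using kc by simp
  qed
  have V: "G (-c) c 1 1 (-(\<kappa>*c)) (\<kappa>*c) = c / 2"
  proof -
    have i: "1 / (\<kappa> * c) = c / 2" using c_sq kc by (simp add: field_simps)
    have a0: "(c - - c) * (\<kappa> * c) / (1 * (\<kappa> * c) - - (\<kappa> * c) * 1) = c"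
      using kc by simp
    have a: "1 + (c - - c) * (\<kappa> * c) / (1 * (\<kappa> * c) - - (\<kappa> * c) * 1) * - (\<kappa> * c) = -1"
      unfolding a0 using c_sq by (simp add: algebra_simps)
    have b: "(c - 1 / (\<kappa> * c)) - (- c - 1 / - (\<kappa> * c)) = c"
      using i by simp
    show ?thesis unfolding G_def a b using c_pos by simp
  qed
  have E: "eventually (\<lambda>h. G (u (S1 h) / sqrt h) (u (S2 h) / sqrt h) (p (S1 h)) (p (S2 h)) (q (S1 h) / sqrt h) (q (S2 h) / sqrt h)
       = U_area I X s0 h / (h * sqrt h)) (at_right 0)"
    using ev_h
  proof eventually_elim
    case (elim h)
    then have h: "0 < h" "h < h0" by auto
    have a: "s0 - \<delta> < S1 h" "S1 h < s0" and b: "s0 < S2 h" "S2 h < s0 + \<delta>"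
      using S1_prop[OF h] S2_prop[OF h] by auto
    have qa: "q (S1 h) < 0" using a by (intro q_neg) auto
    have qb: "q (S2 h) > 0" using b by (intro q_pos) auto
    have pa: "p (S1 h) > 0" using a by (intro dp) auto
    have pb: "p (S2 h) > 0" using b by (intro dp) auto
    define r where "r = sqrt h"
    have r: "r > 0" using h by (auto simp: r_def)
    have rr: "r * r = h" using h by (simp add: r_def)
    define U1 where "U1 = u (S1 h) / r"
    define U2 where "U2 = u (S2 h) / r"
    define Q1 where "Q1 = q (S1 h) / r"
    define Q2 where "Q2 = q (S2 h) / r"
    have eu1: "u (S1 h) = U1 * r" and eu2: "u (S2 h) = U2 * r"
      and eq1: "q (S1 h) = Q1 * r" and eq2: "q (S2 h) = Q2 * r"
      using r by (auto simp: U1_def U2_def Q1_def Q2_def)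
    have Q1: "Q1 < 0" and Q2: "Q2 > 0" using qa qb r by (auto simp: Q1_def Q2_def divide_neg_pos)
    define P1 where "P1 = p (S1 h)"
    define P2 where "P2 = p (S2 h)"
    have m1: "P1 * Q2 > 0" using pa Q2 by (simp add: P1_def)
    have m2: "Q1 * P2 < 0" using pb Q1 by (simp add: P2_def mult_neg_pos)
    have D: "P1 * Q2 - Q1 * P2 \<noteq> 0" using m1 m2 by linarith
    have "U_area I X s0 h / (h * sqrt h) = Uf h (S1 h) (S2 h) / (r * r * r)"
      by (simp only: rr U_eq[OF h] r_def[symmetric])
    also have "Uf h (S1 h) (S2 h) = \<bar>h + (U2*r - U1*r) * (Q2*r) / (P1 * (Q2*r) - (Q1*r) * P2) * (Q1*r)\<bar> *
      \<bar>(U2*r - h * P2 / (Q2*r)) - (U1*r - h * P1 / (Q1*r))\<bar> / 2"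
      unfolding Uf_def eu1 eu2 eq1 eq2 P1_def P2_def ..
    also have "\<dots> = \<bar>r*r + (U2*r - U1*r) * (Q2*r) / (P1 * (Q2*r) - (Q1*r) * P2) * (Q1*r)\<bar> *
      \<bar>(U2*r - r*r * P2 / (Q2*r)) - (U1*r - r*r * P1 / (Q1*r))\<bar> / 2"
      by (simp only: rr)
    also have "\<dots> / (r*r*r) = G U1 U2 P1 P2 Q1 Q2"
      unfolding G_def by (rule Uf_scale[OF r(1)]) (use Q1 Q2 D in auto)
    finally show ?case by (simp only: U1_def U2_def Q1_def Q2_def r_def P1_def P2_def)
  qed
  show ?thesis using Lim_transform_eventually[OF L[unfolded V] E] .
qed

end


theorem theorem1:
  fixes I :: "real set" and X :: "real \<Rightarrow> real^2" and s0 :: real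
  assumes "strictly_convex_curve I X" and "s0 \<in> I"
  shows "eventually (\<lambda>h. \<exists>a1 a2. a1 \<noteq> a2 \<and> meet_set I X s0 h = {a1, a2}) (at_right 0)
    \<and> ((\<lambda>h. T_area I X s0 h / (h * sqrt h)) \<longlongrightarrow> sqrt 2 / sqrt (curvature I X s0)) (at_right 0)
    \<and> ((\<lambda>h. U_area I X s0 h / (h * sqrt h)) \<longlongrightarrow> sqrt 2 / (2 * sqrt (curvature I X s0))) (at_right 0)"
proof -
  have oI: "open I" and C3: "C3_on I X" and un: "\<forall>s\<in>I. norm (D1 X s) = 1" and ij: "inj_on X I"
    and cv: "convex_curve I X" and curv: "\<forall>s\<in>I. curvature I X s > 0"
    using assms(1) unfolding strictly_convex_curve_def by auto
  obtain X1 X2 X3 where d: "\<forall>s\<in>I. (X has_vector_derivative X1 s) (at s)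
      \<and> (X1 has_vector_derivative X2 s) (at s) \<and> (X2 has_vector_derivative X3 s) (at s)"
    using C3 unfolding C3_on_def by blast
  interpret scc I X s0 X1 X2
  proof
    show "open I" by (rule oI)
    show "s0 \<in> I" by (rule assms(2))
    show "\<And>s. s \<in> I \<Longrightarrow> (X has_vector_derivative X1 s) (at s)" using d by blast
    show "\<And>s. s \<in> I \<Longrightarrow> (X1 has_vector_derivative X2 s) (at s)" using d by blast
    show "\<And>s. s \<in> I \<Longrightarrow> isCont X2 s" using d has_vector_derivative_continuous by blast
    show "norm (X1 s) = 1" if "s \<in> I" for s
    proof -
      have "vector_derivative X (at s) = X1 s" using d that by (simp add: vector_derivative_at)
      moreover have "norm (D1 X s) = 1" using un that by blast
      ultimately show ?thesis by (simp add: D1_def)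
    qed
    show "inj_on X I" by (rule ij)
    show "convex_curve I X" by (rule cv)
    show "curvature I X s0 > 0" using curv assms(2) by blast
  qed
  obtain \<delta> where dl: "\<delta> > 0" "\<And>s. \<bar>s - s0\<bar> \<le> \<delta> \<Longrightarrow> s \<in> I \<and> p s > 0 \<and> X2 s \<bullet> N0 > 0"
    using exists_delta by blast
  interpret scc2 I X s0 X1 X2 \<delta>
    by unfold_locales (use dl in auto)
  have c1: "eventually (\<lambda>h. \<exists>a1 a2. a1 \<noteq> a2 \<and> meet_set I X s0 h = {a1, a2}) (at_right 0)"
    using ev_h
  proof eventually_elim
    case (elim h)
    then show ?case using meet_set_eq[of h] S12_ne[of h] by blast
  qed
  have cc: "c = sqrt 2 / sqrt (curvature I X s0)" by (simp add: c_def \<kappa>_def)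
  have c2: "((\<lambda>h. T_area I X s0 h / (h * sqrt h)) \<longlongrightarrow> sqrt 2 / sqrt (curvature I X s0)) (at_right 0)"
    using T_lim unfolding cc .
  have c3: "((\<lambda>h. U_area I X s0 h / (h * sqrt h)) \<longlongrightarrow> sqrt 2 / (2 * sqrt (curvature I X s0))) (at_right 0)"
    using U_lim unfolding cc by (simp add: mult.commute)
  show ?thesis using c1 c2 c3 by blast
qed

end
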